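(* In the setting of the context, fix $U\in\mathrm{Bis}(G)$, let $\Phi_U=\Phi|_{U\cap G_F}\colon U\cap G_F\to\Phi(U\cap G_F)$ (a homeomorphism), and define $\varphi_{\Phi,c,U}\colon C_0(U\cap G_F)\to C_0(\Phi(U\cap G_F))$ by $\varphi_{\Phi,c,U}(f)(\delta)=c(\Phi_U^{-1}(\delta))f(\Phi_U^{-1}(\delta))$. Then $\varphi_{\Phi,c,U}$ is a linear isometric isomorphism, and $\varphi|_{C_0(U)}=\varphi_{\Phi,c,U}\circ q_U$, where $q_U\colon C_0(U)\to C_0(U\cap G_F)$ is the restriction map. In particular the isometry $\widetilde{\varphi_U}\colon C_0(U\cap G_F)\to\varphi(C_0(U))$ with $\varphi|_{C_0(U)}=\widetilde{\varphi_U}\circ q_U$ equals $\varphi_{\Phi,c,U}$.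
   Context: $G$ is an étale groupoid, $H$ an effective étale groupoid (locally compact Hausdorff, $d$ a local homeomorphism; effective = interior of isotropy equals unit space), $\varphi\colon C^*_r(G)\to C^*_r(H)$ a *-homomorphism of reduced groupoid C*-algebras with $\varphi(C_0(G^{(0)}))\subset C_0(H^{(0)})$ an ideal of $C_0(H^{(0)})$; elements of $C^*_r$ are regarded as functions on the groupoid. $\mathrm{Bis}(G)$ is the set of open bisections, $C_0(U)$ the closure of $C_c(U)$ in $C^*_r(G)$. $F\subset G^{(0)}$ is the closed invariant set with $\ker\varphi\cap C_0(G^{(0)})=C_0(G^{(0)}\setminus F)$, $G_F=d^{-1}(F)$. $\psi\colon\mathrm{Bis}(G)\to\mathrm{Bis}(H)$ is the semigroup homomorphism with $\varphi(C_0(U))=C_0(\psi(U))$; $\sigma\colon F\to H^{(0)}$ is the homeomorphism onto the open $V$ with $\varphi(C_0(G^{(0)}))=C_0(V)$ satisfying $\varphi(f)(\sigma(x))=f(x)$; $\Phi\colon G_F\to H$ sends $\alpha\in U\cap G_F$ to the unique $\delta\in\psi(U)$ with $d(\delta)=\sigma(d(\alpha))$, and restricts to a homeomorphism $U\cap G_F\to\psi(U)$; $c\colon G_F\to\mathbb{T}$ is the continuous cocycle $c(\alpha)=\varphi(n)(\Phi(\alpha))/n(\alpha)$ for any $n\in C_0(U)$, $U\in\mathrm{Bis}(G)$ with $\alpha\in U$, $n(\alpha)\ne0$. *)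

theory Defs
  imports "HOL-Analysis.Analysis"
begin

text \<open>A groupoid is given by its set of arrows (a subset of a Hausdorff type),
source map d, range map r, partial multiplication (alpha beta defined iff
d alpha = r beta) and inverse.\<close>

record 'g gpd =
  arr :: "'g set"
  src :: "'g \<Rightarrow> 'g"
  rng :: "'g \<Rightarrow> 'g"
  cmp :: "'g \<Rightarrow> 'g \<Rightarrow> 'g"
  iv  :: "'g \<Rightarrow> 'g"

definition units :: "('g, 'm) gpd_scheme \<Rightarrow> 'g set" where
  "units G = src G ` arr G"

definition composable :: "('g, 'm) gpd_scheme \<Rightarrow> ('g \<times> 'g) set" where
  "composable G = {p \<in> arr G \<times> arr G. src G (fst p) = rng G (snd p)}"

definition groupoid :: "('g, 'm) gpd_scheme \<Rightarrow> bool" where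
  "groupoid G \<longleftrightarrow>
     (\<forall>a\<in>arr G. src G a \<in> arr G \<and> rng G a \<in> arr G \<and> iv G a \<in> arr G)
   \<and> (\<forall>x\<in>units G. src G x = x \<and> rng G x = x)
   \<and> (\<forall>a\<in>arr G. \<forall>b\<in>arr G. src G a = rng G b \<longrightarrow>
        cmp G a b \<in> arr G \<and> src G (cmp G a b) = src G b \<and> rng G (cmp G a b) = rng G a)
   \<and> (\<forall>a\<in>arr G. \<forall>b\<in>arr G. \<forall>c\<in>arr G. src G a = rng G b \<longrightarrow> src G b = rng G c \<longrightarrow>
        cmp G (cmp G a b) c = cmp G a (cmp G b c))
   \<and> (\<forall>a\<in>arr G. cmp G (rng G a) a = a \<and> cmp G a (src G a) = a)
   \<and> (\<forall>a\<in>arr G. src G (iv G a) = rng G a \<and> rng G (iv G a) = src G a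
        \<and> cmp G a (iv G a) = rng G a \<and> cmp G (iv G a) a = src G a)"

text \<open>Etale groupoid: locally compact Hausdorff (Hausdorff via the type class),
continuous multiplication and inversion, and d a local homeomorphism.\<close>

definition etale_groupoid :: "('g::t2_space, 'm) gpd_scheme \<Rightarrow> bool" where
  "etale_groupoid G \<longleftrightarrow> groupoid G
   \<and> locally_compact_space (top_of_set (arr G))
   \<and> continuous_on (arr G) (iv G)
   \<and> continuous_on (composable G) (\<lambda>p. cmp G (fst p) (snd p))
   \<and> continuous_on (arr G) (src G)
   \<and> (\<forall>a\<in>arr G. \<exists>W. openin (top_of_set (arr G)) W \<and> a \<in> W
        \<and> openin (top_of_set (arr G)) (src G ` W) \<and> inj_on (src G) W
        \<and> continuous_on (src G ` W) (the_inv_into W (src G)))"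

definition isotropy :: "('g, 'm) gpd_scheme \<Rightarrow> 'g set" where
  "isotropy G = {a \<in> arr G. src G a = rng G a}"

definition effective :: "('g::t2_space, 'm) gpd_scheme \<Rightarrow> bool" where
  "effective G \<longleftrightarrow> etale_groupoid G
     \<and> (top_of_set (arr G)) interior_of (isotropy G) = units G"

definition open_bisection :: "('g::t2_space, 'm) gpd_scheme \<Rightarrow> 'g set \<Rightarrow> bool" where
  "open_bisection G U \<longleftrightarrow> U \<subseteq> arr G \<and> openin (top_of_set (arr G)) U
     \<and> inj_on (src G) U \<and> inj_on (rng G) U"

definition invariant :: "('g, 'm) gpd_scheme \<Rightarrow> 'g set \<Rightarrow> bool" where
  "invariant G F \<longleftrightarrow> (\<forall>a\<in>arr G. src G a \<in> F \<longleftrightarrow> rng G a \<in> F)"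

definition reduction :: "('g, 'm) gpd_scheme \<Rightarrow> 'g set \<Rightarrow> 'g set" where
  "reduction G F = {a \<in> arr G. src G a \<in> F}"

text \<open>C_c(U) for an open U: continuous on U, compactly supported in U, extended by 0.\<close>
definition Cc_on :: "('g::t2_space, 'm) gpd_scheme \<Rightarrow> 'g set \<Rightarrow> ('g \<Rightarrow> complex) \<Rightarrow> bool" where
  "Cc_on G U f \<longleftrightarrow> continuous_on U f
     \<and> (\<exists>K. compact K \<and> K \<subseteq> U \<and> (\<forall>x. x \<notin> K \<longrightarrow> f x = 0))"

definition fibre :: "('g, 'm) gpd_scheme \<Rightarrow> 'g \<Rightarrow> 'g set" where
  "fibre G x = {b \<in> arr G. src G b = x}"

definition l2norm :: "'g set \<Rightarrow> ('g \<Rightarrow> complex) \<Rightarrow> real" where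
  "l2norm S \<xi> = sqrt (infsum (\<lambda>b. (cmod (\<xi> b))\<^sup>2) S)"

definition is_l2 :: "'g set \<Rightarrow> ('g \<Rightarrow> complex) \<Rightarrow> bool" where
  "is_l2 S \<xi> \<longleftrightarrow> (\<lambda>b. (cmod (\<xi> b))\<^sup>2) summable_on S"

text \<open>Convolution (also the left regular representation lambda_x(f) xi).\<close>
definition conv :: "('g, 'm) gpd_scheme \<Rightarrow> ('g \<Rightarrow> complex) \<Rightarrow> ('g \<Rightarrow> complex) \<Rightarrow> 'g \<Rightarrow> complex" where
  "conv G f g c = (if c \<in> arr G then
      infsum (\<lambda>a. f a * g (cmp G (iv G a) c)) {a \<in> arr G. rng G a = rng G c} else 0)"

definition star :: "('g, 'm) gpd_scheme \<Rightarrow> ('g \<Rightarrow> complex) \<Rightarrow> 'g \<Rightarrow> complex" where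
  "star G f c = (if c \<in> arr G then cnj (f (iv G c)) else 0)"

definition rnorm :: "('g, 'm) gpd_scheme \<Rightarrow> ('g \<Rightarrow> complex) \<Rightarrow> real" where
  "rnorm G f = Sup {l2norm (fibre G x) (conv G f \<xi>) | x \<xi>.
      x \<in> units G \<and> is_l2 (fibre G x) \<xi> \<and> l2norm (fibre G x) \<xi> \<le> 1}"

text \<open>Closure of C_c(U) in the reduced norm, viewed as functions on G (the
pointwise limits of reduced-norm Cauchy sequences in C_c(U)).\<close>
definition C0_in :: "('g::t2_space, 'm) gpd_scheme \<Rightarrow> 'g set \<Rightarrow> ('g \<Rightarrow> complex) set" where
  "C0_in G U = {f. \<exists>gs. (\<forall>n. Cc_on G U (gs n))
      \<and> (\<forall>e>0. \<exists>N. \<forall>m\<ge>N. \<forall>n\<ge>N. rnorm G (\<lambda>c. gs m c - gs n c) < e)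
      \<and> (\<forall>c. (\<lambda>n. gs n c) \<longlonglongrightarrow> f c)}"

definition Cstar_r :: "('g::t2_space, 'm) gpd_scheme \<Rightarrow> ('g \<Rightarrow> complex) set" where
  "Cstar_r G = C0_in G (arr G)"

definition star_hom :: "('g::t2_space, 'm) gpd_scheme \<Rightarrow> ('h::t2_space, 'n) gpd_scheme
    \<Rightarrow> (('g \<Rightarrow> complex) \<Rightarrow> ('h \<Rightarrow> complex)) \<Rightarrow> bool" where
  "star_hom G H \<phi> \<longleftrightarrow> (\<forall>f\<in>Cstar_r G. \<phi> f \<in> Cstar_r H)
   \<and> (\<forall>f\<in>Cstar_r G. \<forall>g\<in>Cstar_r G. \<phi> (\<lambda>c. f c + g c) = (\<lambda>c. \<phi> f c + \<phi> g c))
   \<and> (\<forall>f\<in>Cstar_r G. \<forall>a. \<phi> (\<lambda>c. a * f c) = (\<lambda>c. a * \<phi> f c))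
   \<and> (\<forall>f\<in>Cstar_r G. \<forall>g\<in>Cstar_r G. \<phi> (conv G f g) = conv H (\<phi> f) (\<phi> g))
   \<and> (\<forall>f\<in>Cstar_r G. \<phi> (star G f) = star H (\<phi> f))"

definition is_ideal_in :: "('h, 'n) gpd_scheme \<Rightarrow> ('h \<Rightarrow> complex) set \<Rightarrow> ('h \<Rightarrow> complex) set \<Rightarrow> bool" where
  "is_ideal_in H I A \<longleftrightarrow> I \<subseteq> A \<and> (\<lambda>_. 0) \<in> I
   \<and> (\<forall>f\<in>I. \<forall>g\<in>I. (\<lambda>c. f c + g c) \<in> I)
   \<and> (\<forall>f\<in>I. \<forall>a. (\<lambda>c. a * f c) \<in> I)
   \<and> (\<forall>f\<in>I. \<forall>g\<in>A. conv H f g \<in> I \<and> conv H g f \<in> I)"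

definition C0fun :: "'a::topological_space set \<Rightarrow> ('a \<Rightarrow> complex) set" where
  "C0fun S = {f. continuous_on S f \<and> (\<forall>x. x \<notin> S \<longrightarrow> f x = 0)
      \<and> (\<forall>e>0. \<exists>K. compact K \<and> K \<subseteq> S \<and> (\<forall>x\<in>S - K. cmod (f x) < e))}"

definition supnorm :: "'a set \<Rightarrow> ('a \<Rightarrow> complex) \<Rightarrow> real" where
  "supnorm S f = (if S = {} then 0 else (SUP x\<in>S. cmod (f x)))"

definition restr :: "'a set \<Rightarrow> ('a \<Rightarrow> complex) \<Rightarrow> 'a \<Rightarrow> complex" where
  "restr S f = (\<lambda>x. if x \<in> S then f x else 0)"

definition phi_Phi_c :: "('g \<Rightarrow> 'h) \<Rightarrow> ('g \<Rightarrow> complex) \<Rightarrow> 'g set \<Rightarrow> ('g \<Rightarrow> complex) \<Rightarrow> 'h \<Rightarrow> complex" where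
  "phi_Phi_c \<Phi> c S f = (\<lambda>d. if d \<in> \<Phi> ` S
      then c (the_inv_into S \<Phi> d) * f (the_inv_into S \<Phi> d) else 0)"

end

theory Submission imports Defs begin
lemma gpd_facts:
  assumes "groupoid G"
  shows "\<And>a. a \<in> arr G \<Longrightarrow> src G a \<in> arr G \<and> rng G a \<in> arr G \<and> iv G a \<in> arr G"
    and "\<And>x. x \<in> units G \<Longrightarrow> src G x = x \<and> rng G x = x"
    and "\<And>a b. a \<in> arr G \<Longrightarrow> b \<in> arr G \<Longrightarrow> src G a = rng G b \<Longrightarrow>
        cmp G a b \<in> arr G \<and> src G (cmp G a b) = src G b \<and> rng G (cmp G a b) = rng G a"
    and "\<And>a b c. a \<in> arr G \<Longrightarrow> b \<in> arr G \<Longrightarrow> c \<in> arr G \<Longrightarrow> src G a = rng G b \<Longrightarrow> src G b = rng G c \<Longrightarrow>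
        cmp G (cmp G a b) c = cmp G a (cmp G b c)"
    and "\<And>a. a \<in> arr G \<Longrightarrow> cmp G (rng G a) a = a \<and> cmp G a (src G a) = a"
    and "\<And>a. a \<in> arr G \<Longrightarrow> src G (iv G a) = rng G a \<and> rng G (iv G a) = src G a
        \<and> cmp G a (iv G a) = rng G a \<and> cmp G (iv G a) a = src G a"
  using assms unfolding groupoid_def by blast+

lemma conv_bis:
  assumes G: "groupoid G" and V: "V \<subseteq> arr G" "inj_on (rng G) V"
    and g0: "\<And>x. x \<notin> V \<Longrightarrow> g x = 0"
    and c: "c \<in> arr G" and a: "a \<in> V" "rng G a = rng G c"
  shows "conv G g \<xi> c = g a * \<xi> (cmp G (iv G a) c)"
proof -
  let ?h = "\<lambda>a. g a * \<xi> (cmp G (iv G a) c)"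
  have "infsum ?h {a \<in> arr G. rng G a = rng G c} = infsum ?h {a}"
  proof (rule infsum_cong_neutral)
    fix x assume "x \<in> {a \<in> arr G. rng G a = rng G c} - {a}"
    then have "x \<in> arr G" "rng G x = rng G a" "x \<noteq> a" using a by auto
    then have "x \<notin> V" using V(2) a(1) by (meson inj_onD)
    then show "?h x = 0" using g0 by simp
  next
    fix x assume "x \<in> {a} - {a \<in> arr G. rng G a = rng G c}"
    then show "?h x = 0" using a V by auto
  qed simp
  then show ?thesis using c by (simp add: conv_def)
qed

lemma conv_none:
  assumes "\<And>x. x \<notin> V \<Longrightarrow> g x = 0"
    and "\<not> (\<exists>a\<in>V. rng G a = rng G c)"
  shows "conv G g \<xi> c = 0"
proof -
  have "infsum (\<lambda>a. g a * \<xi> (cmp G (iv G a) c)) {a \<in> arr G. rng G a = rng G c} = infsum (\<lambda>_. 0) {a \<in> arr G. rng G a = rng G c}"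
    by (rule infsum_cong) (use assms in auto)
  then show ?thesis by (simp add: conv_def)
qed

lemma conv_l2:
  assumes G: "groupoid G" and V: "V \<subseteq> arr G" "inj_on (src G) V" "inj_on (rng G) V"
    and g0: "\<And>x. x \<notin> V \<Longrightarrow> g x = 0" and gM: "\<And>x. cmod (g x) \<le> M"
    and xi: "is_l2 (fibre G x) \<xi>"
  shows "is_l2 (fibre G x) (conv G g \<xi>) \<and>
    infsum (\<lambda>b. (cmod (conv G g \<xi> b))\<^sup>2) (fibre G x) \<le> M\<^sup>2 * infsum (\<lambda>b. (cmod (\<xi> b))\<^sup>2) (fibre G x)"
proof -
  note gf = gpd_facts[OF G]
  define Fx where "Fx = fibre G x"
  define D where "D = {c \<in> Fx. \<exists>a\<in>V. rng G a = rng G c}"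
  define \<alpha> where "\<alpha> c = the_inv_into V (rng G) (rng G c)" for c
  define \<kappa> where "\<kappa> c = cmp G (iv G (\<alpha> c)) c" for c
  define q where "q b = (cmod (\<xi> b))\<^sup>2" for b
  define p where "p b = (cmod (conv G g \<xi> b))\<^sup>2" for b
  have \<alpha>: "\<alpha> c \<in> V \<and> rng G (\<alpha> c) = rng G c" if cD: "c \<in> D" for c
  proof -
    obtain a where a: "a \<in> V" "rng G a = rng G c" using cD by (auto simp: D_def)
    then have "rng G c \<in> rng G ` V" by (metis image_eqI)
    then show ?thesis unfolding \<alpha>_def
      using the_inv_into_into[OF V(3) _ subset_refl] f_the_inv_into_f[OF V(3)] by blast
  qed
  have Fx: "c \<in> Fx \<longleftrightarrow> c \<in> arr G \<and> src G c = x" for c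
    by (simp add: Fx_def fibre_def)
  have \<kappa>F: "\<kappa> c \<in> Fx" and \<kappa>r: "rng G (\<kappa> c) = src G (\<alpha> c)" if "c \<in> D" for c
  proof -
    have a: "\<alpha> c \<in> arr G" "c \<in> arr G" "src G (iv G (\<alpha> c)) = rng G c" "src G c = x"
      using \<alpha>[OF that] V that gf(6) by (auto simp: D_def Fx)
    have "iv G (\<alpha> c) \<in> arr G" using a gf(1) by blast
    then show "\<kappa> c \<in> Fx" "rng G (\<kappa> c) = src G (\<alpha> c)"
      using gf(3)[of "iv G (\<alpha> c)" c] a gf(6)[of "\<alpha> c"] by (auto simp: \<kappa>_def Fx)
  qed
  have kback: "cmp G (\<alpha> c) (\<kappa> c) = c" if "c \<in> D" for c
  proof -
    have a: "\<alpha> c \<in> arr G" "c \<in> arr G" "rng G (\<alpha> c) = rng G c"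
      using \<alpha>[OF that] V that by (auto simp: D_def Fx)
    have i: "iv G (\<alpha> c) \<in> arr G" using a gf(1) by blast
    have "cmp G (\<alpha> c) (\<kappa> c) = cmp G (cmp G (\<alpha> c) (iv G (\<alpha> c))) c"
      unfolding \<kappa>_def using gf(4)[OF a(1) i a(2)] gf(6)[OF a(1)] a by simp
    also have "\<dots> = c" using gf(6)[OF a(1)] gf(5)[OF a(2)] a by simp
    finally show ?thesis .
  qed
  have inj: "inj_on \<kappa> D"
  proof (rule inj_onI)
    fix c d assume cd: "c \<in> D" "d \<in> D" "\<kappa> c = \<kappa> d"
    then have "src G (\<alpha> c) = src G (\<alpha> d)" using \<kappa>r by metis
    then have "\<alpha> c = \<alpha> d" using V(2) \<alpha> cd by (meson inj_onD)
    then show "c = d" using kback cd by metis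
  qed
  have convD: "conv G g \<xi> c = g (\<alpha> c) * \<xi> (\<kappa> c)" if "c \<in> D" for c
    unfolding \<kappa>_def using conv_bis[OF G V(1) V(3) g0] \<alpha>[OF that] that by (auto simp: D_def Fx)
  have conv0: "conv G g \<xi> c = 0" if "c \<in> Fx - D" for c
    using conv_none[OF g0] that by (auto simp: D_def)
  have qs: "q summable_on Fx" using xi unfolding is_l2_def q_def[abs_def] Fx_def by simp
  have qs2: "q summable_on (\<kappa> ` D)"
    using qs by (rule summable_on_subset_banach) (use \<kappa>F in auto)
  have qk: "(q \<circ> \<kappa>) summable_on D" using qs2 summable_on_reindex[OF inj] by blast
  have qk2: "(\<lambda>c. M\<^sup>2 * (q \<circ> \<kappa>) c) summable_on D" using qk by (rule summable_on_cmult_right)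
  have pq: "p c \<le> M\<^sup>2 * (q \<circ> \<kappa>) c" if "c \<in> D" for c
  proof -
    have "p c = (cmod (g (\<alpha> c)))\<^sup>2 * q (\<kappa> c)"
      using convD[OF that] by (simp add: p_def q_def norm_mult power_mult_distrib)
    also have "\<dots> \<le> M\<^sup>2 * q (\<kappa> c)"
      by (intro mult_right_mono power_mono gM) (auto simp: q_def)
    finally show ?thesis by simp
  qed
  have psD: "p summable_on D"
    by (rule summable_on_comparison_test[OF qk2 pq]) (auto simp: p_def)
  have eq: "infsum p Fx = infsum p D"
    by (rule infsum_cong_neutral) (use conv0 in \<open>auto simp: p_def D_def\<close>)
  have sumeq: "p summable_on Fx \<longleftrightarrow> p summable_on D"
    by (rule summable_on_cong_neutral) (use conv0 in \<open>auto simp: p_def D_def\<close>)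
  have "infsum p D \<le> infsum (\<lambda>c. M\<^sup>2 * (q \<circ> \<kappa>) c) D"
    by (rule infsum_mono[OF psD qk2 pq])
  also have "\<dots> = M\<^sup>2 * infsum (q \<circ> \<kappa>) D" by (rule infsum_cmult_right') 
  also have "\<dots> = M\<^sup>2 * infsum q (\<kappa> ` D)" by (simp add: infsum_reindex[OF inj])
  also have "\<dots> \<le> M\<^sup>2 * infsum q Fx"
    by (intro mult_left_mono infsum_mono_neutral qs2 qs) (use \<kappa>F in \<open>auto simp: q_def\<close>)
  finally have le: "infsum p Fx \<le> M\<^sup>2 * infsum q Fx" using eq by simp
  moreover have "p summable_on Fx" using sumeq psD by blast
  ultimately show ?thesis unfolding is_l2_def Fx_def p_def[abs_def] q_def[abs_def] by blast
qed

lemma rnorm_bis: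
  assumes G: "groupoid G" and V: "V \<subseteq> arr G" "inj_on (src G) V" "inj_on (rng G) V"
    and g0: "\<And>x. x \<notin> V \<Longrightarrow> g x = 0" and gM: "\<And>x. cmod (g x) \<le> M" and M: "0 \<le> M"
    and U: "units G \<noteq> {}"
  shows "rnorm G g \<le> M" and "b \<in> V \<Longrightarrow> cmod (g b) \<le> rnorm G g"
proof -
  note gf = gpd_facts[OF G]
  define X where "X = {l2norm (fibre G x) (conv G g \<xi>) | x \<xi>.
      x \<in> units G \<and> is_l2 (fibre G x) \<xi> \<and> l2norm (fibre G x) \<xi> \<le> 1}"
  have r: "rnorm G g = Sup X" by (simp add: rnorm_def X_def)
  have le: "y \<le> M" if yX: "y \<in> X" for y
  proof -
    obtain x \<xi> where y: "y = l2norm (fibre G x) (conv G g \<xi>)" and xi: "is_l2 (fibre G x) \<xi>"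
      and n: "l2norm (fibre G x) \<xi> \<le> 1" using yX by (auto simp: X_def)
    define I where "I = infsum (\<lambda>b. (cmod (\<xi> b))\<^sup>2) (fibre G x)"
    have I0: "0 \<le> I" unfolding I_def by (rule infsum_nonneg) simp
    have "sqrt I \<le> 1" using n by (simp add: l2norm_def I_def)
    then have I1: "I \<le> 1" by simp
    have "infsum (\<lambda>b. (cmod (conv G g \<xi> b))\<^sup>2) (fibre G x) \<le> M\<^sup>2 * I"
      using conv_l2[OF G V g0 gM xi] by (simp add: I_def)
    also have "\<dots> \<le> M\<^sup>2" using I1 by (simp add: mult_left_le)
    finally have "y \<le> sqrt (M\<^sup>2)" unfolding y l2norm_def by (rule real_sqrt_le_mono)
    then show ?thesis using M by simp
  qed
  have ne: "X \<noteq> {}"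
  proof -
    obtain x where "x \<in> units G" using U by blast
    moreover have "is_l2 (fibre G x) (\<lambda>_. 0)" by (simp add: is_l2_def)
    moreover have "l2norm (fibre G x) (\<lambda>_. 0) \<le> 1" by (simp add: l2norm_def)
    ultimately show ?thesis unfolding X_def by blast
  qed
  show "rnorm G g \<le> M" unfolding r by (rule cSup_least[OF ne le])
  assume b: "b \<in> V"
  define x where "x = src G b"
  define \<xi> :: "_ \<Rightarrow> complex" where "\<xi> y = (if y = x then 1 else 0)" for y
  have barr: "b \<in> arr G" using b V by auto
  have xu: "x \<in> units G" using barr by (simp add: x_def units_def)
  have xF: "x \<in> fibre G x" using gf(1)[OF barr] gf(2)[OF xu] by (simp add: fibre_def x_def)
  have bF: "b \<in> fibre G x" using barr by (simp add: fibre_def x_def)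
  have e1: "(\<lambda>y. (cmod (\<xi> y))\<^sup>2) summable_on fibre G x \<longleftrightarrow> (\<lambda>y. (cmod (\<xi> y))\<^sup>2) summable_on {x}"
    by (rule summable_on_cong_neutral) (use xF in \<open>auto simp: \<xi>_def\<close>)
  have e2: "infsum (\<lambda>y. (cmod (\<xi> y))\<^sup>2) (fibre G x) = infsum (\<lambda>y. (cmod (\<xi> y))\<^sup>2) {x}"
    by (rule infsum_cong_neutral) (use xF in \<open>auto simp: \<xi>_def\<close>)
  have xi: "is_l2 (fibre G x) \<xi>" using e1 by (simp add: is_l2_def)
  have n1: "l2norm (fibre G x) \<xi> \<le> 1" using e2 by (simp add: l2norm_def \<xi>_def)
  have inX: "l2norm (fibre G x) (conv G g \<xi>) \<in> X" unfolding X_def using xu xi n1 by blast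
  have cb: "conv G g \<xi> b = g b"
    using conv_bis[OF G V(1) V(3) g0 barr b refl] gf(6)[OF barr] by (simp add: \<xi>_def x_def)
  have ps: "(\<lambda>y. (cmod (conv G g \<xi> y))\<^sup>2) summable_on fibre G x"
    using conv_l2[OF G V g0 gM xi] by (simp add: is_l2_def)
  have "infsum (\<lambda>y. (cmod (conv G g \<xi> y))\<^sup>2) {b} \<le> infsum (\<lambda>y. (cmod (conv G g \<xi> y))\<^sup>2) (fibre G x)"
    by (rule infsum_mono_neutral) (use ps bF in auto)
  then have "(cmod (g b))\<^sup>2 \<le> infsum (\<lambda>y. (cmod (conv G g \<xi> y))\<^sup>2) (fibre G x)" using cb by simp
  then have "sqrt ((cmod (g b))\<^sup>2) \<le> l2norm (fibre G x) (conv G g \<xi>)"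
    unfolding l2norm_def by (rule real_sqrt_le_mono)
  then have "cmod (g b) \<le> l2norm (fibre G x) (conv G g \<xi>)" by simp
  also have "\<dots> \<le> Sup X" by (rule cSup_upper[OF inX]) (use le in \<open>auto simp: bdd_above_def\<close>)
  finally show "cmod (g b) \<le> rnorm G g" using r by simp
qed

lemma Cc_bounded:
  assumes "Cc_on G U g" shows "\<exists>M\<ge>0. \<forall>x. cmod (g x) \<le> M"
proof -
  obtain K where K: "compact K" "K \<subseteq> U" "\<And>x. x \<notin> K \<Longrightarrow> g x = 0" and c: "continuous_on U g"
    using assms by (auto simp: Cc_on_def)
  have "compact (g ` K)" using K c by (meson compact_continuous_image continuous_on_subset)
  then obtain B where B: "\<And>y. y \<in> g ` K \<Longrightarrow> norm y \<le> B"
    by (meson compact_imp_bounded bounded_iff)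
  show ?thesis
  proof (intro exI[of _ "max B 0"] conjI allI)
    fix x show "cmod (g x) \<le> max B 0" using B[of "g x"] K(3)[of x] by (cases "x \<in> K") auto
  qed simp
qed

lemma Cc_zero: "Cc_on G U g \<Longrightarrow> x \<notin> U \<Longrightarrow> g x = 0"
  by (auto simp: Cc_on_def)

lemma Cc_arr:
  fixes g :: "'g::t2_space \<Rightarrow> complex"
  assumes U: "openin (top_of_set (arr G)) U" and g: "Cc_on G U g"
  shows "Cc_on G (arr G) g"
proof -
  obtain K where K: "compact K" "K \<subseteq> U" "\<And>x. x \<notin> K \<Longrightarrow> g x = 0" and c: "continuous_on U g"
    using g by (auto simp: Cc_on_def)
  have Us: "U \<subseteq> arr G" using U openin_imp_subset by auto
  have e: "arr G = U \<union> (arr G \<inter> - K)" using Us K by auto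
  have o2: "openin (top_of_set (arr G)) (arr G \<inter> - K)"
    using K(1) compact_imp_closed by blast
  have "continuous_on (U \<union> (arr G \<inter> - K)) g"
  proof (rule continuous_on_Un_local_open)
    show "openin (top_of_set (U \<union> (arr G \<inter> - K))) U" using U e by simp
    show "openin (top_of_set (U \<union> (arr G \<inter> - K))) (arr G \<inter> - K)" using o2 e by simp
    show "continuous_on (arr G \<inter> - K) g"
      by (rule continuous_on_cong[THEN iffD1, OF refl _ continuous_on_const[of _ 0]]) (use K in auto)
  qed (rule c)
  then show ?thesis using e K Us by (auto simp: Cc_on_def)
qed

lemma C0_zero:
  assumes "f \<in> C0_in G U" "x \<notin> U" shows "f x = 0"
proof -
  obtain gs where gs: "\<And>n. Cc_on G U (gs n)" "(\<lambda>n. gs n x) \<longlonglongrightarrow> f x"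
    using assms unfolding C0_in_def by blast
  have "(\<lambda>n. gs n x) = (\<lambda>n. 0)" using gs(1) assms(2) by (auto intro: Cc_zero)
  then show ?thesis using gs(2) LIMSEQ_unique tendsto_const by metis
qed

lemma C0_Cstar:
  fixes G :: "('g::t2_space, 'm) gpd_scheme"
  assumes U: "openin (top_of_set (arr G)) U" and f: "f \<in> C0_in G U"
  shows "f \<in> Cstar_r G"
  using f Cc_arr[OF U] unfolding C0_in_def Cstar_r_def by blast

lemma C0_unif:
  fixes G :: "('g::t2_space, 'm) gpd_scheme"
  assumes G: "groupoid G" and U: "open_bisection G U" and f: "f \<in> C0_in G U"
  shows "continuous_on U f \<and> (\<forall>e>0. \<exists>K. compact K \<and> K \<subseteq> U \<and> (\<forall>x\<in>U-K. cmod (f x) < e))"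
proof (cases "U = {}")
  case True then show ?thesis by auto
next
  case False
  obtain gs where gs: "\<And>n. Cc_on G U (gs n)"
    and cau: "\<And>e. e > 0 \<Longrightarrow> \<exists>N. \<forall>m\<ge>N. \<forall>n\<ge>N. rnorm G (\<lambda>c. gs m c - gs n c) < e"
    and lim: "\<And>c. (\<lambda>n. gs n c) \<longlonglongrightarrow> f c"
    using f unfolding C0_in_def by blast
  have Ub: "U \<subseteq> arr G" "inj_on (src G) U" "inj_on (rng G) U"
    using U by (auto simp: open_bisection_def)
  have un: "units G \<noteq> {}" using False Ub by (auto simp: units_def)
  have pt: "cmod (gs m b - gs n b) \<le> rnorm G (\<lambda>c. gs m c - gs n c)" if "b \<in> U" for m n b
  proof -
    obtain M1 where M1: "M1 \<ge> 0" "\<And>x. cmod (gs m x) \<le> M1" using Cc_bounded[OF gs] by blast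
    obtain M2 where M2: "M2 \<ge> 0" "\<And>x. cmod (gs n x) \<le> M2" using Cc_bounded[OF gs] by blast
    have "cmod (gs m x - gs n x) \<le> M1 + M2" for x
      using norm_triangle_ineq4[of "gs m x" "gs n x"] M1 M2 by (meson add_mono order_trans)
    then show ?thesis
      using rnorm_bis(2)[OF G Ub, of "\<lambda>c. gs m c - gs n c" "M1 + M2" b] Cc_zero[OF gs] M1 M2 un that
      by auto
  qed
  have unif: "\<exists>N. \<forall>n\<ge>N. \<forall>b\<in>U. cmod (gs n b - f b) \<le> e" if e: "e > 0" for e
  proof -
    obtain N where N: "\<And>m n. m \<ge> N \<Longrightarrow> n \<ge> N \<Longrightarrow> rnorm G (\<lambda>c. gs m c - gs n c) < e"
      using cau[OF e] by blast
    show ?thesis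
    proof (intro exI[of _ N] allI impI ballI)
      fix n b assume n: "n \<ge> N" and b: "b \<in> U"
      have "(\<lambda>m. gs n b - gs m b) \<longlonglongrightarrow> gs n b - f b" by (intro tendsto_intros lim)
      moreover have "eventually (\<lambda>m. norm (gs n b - gs m b) \<le> e) sequentially"
        unfolding eventually_sequentially
        using N[OF n] pt[OF b, of n] by (meson less_imp_le order_trans)
      ultimately show "cmod (gs n b - f b) \<le> e"
        by (intro Lim_norm_ubound[of sequentially]) auto
    qed
  qed
  have ul: "uniform_limit U gs f sequentially"
    unfolding uniform_limit_sequentially_iff dist_norm
  proof (intro allI impI)
    fix e :: real assume "e > 0"
    then obtain N where "\<forall>n\<ge>N. \<forall>b\<in>U. cmod (gs n b - f b) \<le> e/2" using unif[of "e/2"] by auto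
    then show "\<exists>N. \<forall>n\<ge>N. \<forall>x\<in>U. cmod (gs n x - f x) < e" using \<open>e > 0\<close>
      by (smt (verit) field_sum_of_halves)
  qed
  have "continuous_on U f"
    by (rule uniform_limit_theorem[OF _ ul]) (use gs in \<open>auto simp: Cc_on_def\<close>)
  moreover have "\<exists>K. compact K \<and> K \<subseteq> U \<and> (\<forall>x\<in>U-K. cmod (f x) < e)" if e: "e > 0" for e
  proof -
    obtain N where N: "\<forall>b\<in>U. cmod (gs N b - f b) \<le> e/2" using unif[of "e/2"] e by auto
    obtain K where K: "compact K" "K \<subseteq> U" "\<And>x. x \<notin> K \<Longrightarrow> gs N x = 0"
      using gs[of N] by (auto simp: Cc_on_def)
    have "cmod (f x) < e" if "x \<in> U - K" for x
    proof -
      have "cmod (f x) = cmod (gs N x - f x)" using K(3) that by simp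
      also have "\<dots> \<le> e/2" using N that by auto
      finally show ?thesis using e by simp
    qed
    then show ?thesis using K by blast
  qed
  ultimately show ?thesis by blast
qed

definition tr :: "real \<Rightarrow> complex \<Rightarrow> complex" where
  "tr r z = z * of_real (max 0 (cmod z - r) / max r (cmod z))"

lemma tr0: "cmod z \<le> r \<Longrightarrow> tr r z = 0"
  by (simp add: tr_def)

lemma trd: assumes r: "r > 0" shows "cmod (tr r z - z) \<le> r"
proof (cases "cmod z \<le> r")
  case True then show ?thesis by (simp add: tr0)
next
  case False
  then have z: "z \<noteq> 0" and m: "max 0 (cmod z - r) = cmod z - r" "max r (cmod z) = cmod z" using r by auto
  have "tr r z - z = - (z * of_real (r / cmod z))"
    using z by (simp add: tr_def m field_simps)
  then have "cmod (tr r z - z) = cmod z * (r / cmod z)" using r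
    by (simp only: norm_minus_cancel norm_mult norm_of_real) simp
  also have "\<dots> = r" using z by simp
  finally show ?thesis by simp
qed

lemma tr_cont: assumes "r > 0" "continuous_on W h" shows "continuous_on W (\<lambda>x. tr r (h x))"
  unfolding tr_def using assms
  by (intro continuous_intros) (auto simp: max_def)

lemma C0fun_in:
  fixes H :: "('h::t2_space, 'n) gpd_scheme"
  assumes H: "groupoid H" and W: "open_bisection H W"
    and small: "\<And>h e. units H = {} \<Longrightarrow> e > 0 \<Longrightarrow> rnorm H h < e"
    and h: "h \<in> C0fun W"
  shows "h \<in> C0_in H W"
proof -
  define \<rho> where "\<rho> n = inverse (real (Suc n))" for n
  have \<rho>: "\<rho> n > 0" for n by (simp add: \<rho>_def)
  define hs where "hs n = (\<lambda>x. tr (\<rho> n) (h x))" for n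
  have hc: "continuous_on W h" and h0: "\<And>x. x \<notin> W \<Longrightarrow> h x = 0"
    and hv: "\<And>e. e > 0 \<Longrightarrow> \<exists>K. compact K \<and> K \<subseteq> W \<and> (\<forall>x\<in>W - K. cmod (h x) < e)"
    using h by (auto simp: C0fun_def)
  have Wb: "W \<subseteq> arr H" "inj_on (src H) W" "inj_on (rng H) W"
    using W by (auto simp: open_bisection_def)
  have Cc: "Cc_on H W (hs n)" for n
  proof -
    obtain K where K: "compact K" "K \<subseteq> W" "\<forall>x\<in>W - K. cmod (h x) < \<rho> n" using hv[OF \<rho>] by blast
    have "hs n x = 0" if "x \<notin> K" for x
    proof (cases "x \<in> W")
      case True then have "cmod (h x) < \<rho> n" using K that by blast
      then show ?thesis by (auto simp: hs_def intro!: tr0)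
    next
      case False then show ?thesis using h0 \<rho>[of n] by (auto simp: hs_def intro!: tr0)
    qed
    then show ?thesis using K tr_cont[OF \<rho> hc] by (auto simp: Cc_on_def hs_def)
  qed
  have hsd: "cmod (hs n x - h x) \<le> \<rho> n" for n x using trd[OF \<rho>] by (simp add: hs_def)
  have hs0: "hs n x = 0" if "x \<notin> W" for n x using h0[OF that] \<rho>[of n] by (simp add: hs_def tr0)
  have cau: "\<exists>N. \<forall>m\<ge>N. \<forall>n\<ge>N. rnorm H (\<lambda>c. hs m c - hs n c) < e" if e: "e > 0" for e
  proof -
    obtain N where N: "inverse (real (Suc N)) < e/2" using e by (meson half_gt_zero reals_Archimedean)
    have \<rho>N: "\<rho> n \<le> \<rho> N" if "n \<ge> N" for n using that by (simp add: \<rho>_def)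
    show ?thesis
    proof (intro exI[of _ N] allI impI)
      fix m n assume mn: "m \<ge> N" "n \<ge> N"
      show "rnorm H (\<lambda>c. hs m c - hs n c) < e"
      proof (cases "units H = {}")
        case True then show ?thesis using small e by blast
      next
        case False
        have b: "cmod (hs m x - hs n x) \<le> 2 * \<rho> N" for x
        proof -
          have "cmod (hs m x - hs n x) \<le> cmod (hs m x - h x) + cmod (hs n x - h x)"
            using norm_triangle_ineq4[of "hs m x - h x" "hs n x - h x"] by simp
          also have "\<dots> \<le> \<rho> N + \<rho> N" using hsd[of m x] hsd[of n x] \<rho>N mn by (meson add_mono order_trans)
          finally show ?thesis by simp
        qed
        have "rnorm H (\<lambda>c. hs m c - hs n c) \<le> 2 * \<rho> N"
          by (rule rnorm_bis(1)[OF H Wb _ b]) (use hs0 \<rho>[of N] False in auto)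
        also have "\<dots> < e" using N by (simp add: \<rho>_def)
        finally show ?thesis .
      qed
    qed
  qed
  have lim: "(\<lambda>n. hs n c) \<longlonglongrightarrow> h c" for c
  proof -
    have "(\<lambda>n. hs n c - h c) \<longlonglongrightarrow> 0"
      by (rule Lim_null_comparison[OF _ LIMSEQ_inverse_real_of_nat]) (use hsd in \<open>auto simp: \<rho>_def\<close>)
    then show ?thesis by (simp add: LIM_zero_iff)
  qed
  show ?thesis unfolding C0_in_def using Cc cau lim by blast
qed

lemma Hausdorff_t2: "Hausdorff_space (euclidean :: ('a::t2_space) topology)"
  unfolding Hausdorff_space_def disjnt_def using hausdorff by fastforce

lemma bump:
  fixes G :: "('g::t2_space, 'm) gpd_scheme"
  assumes lc: "locally_compact_space (top_of_set (arr G))"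
    and U: "openin (top_of_set (arr G)) U" and a: "a \<in> U"
  shows "\<exists>n. Cc_on G U n \<and> n a \<noteq> 0"
proof -
  define X where "X = top_of_set (arr G)"
  have hs: "Hausdorff_space X" unfolding X_def by (rule Hausdorff_space_subtopology[OF Hausdorff_t2])
  have lcX: "locally_compact_space X" using lc by (simp add: X_def)
  have reg: "regular_space X" by (rule locally_compact_Hausdorff_imp_regular_space[OF lcX hs])
  have nb: "neighbourhood_base_of (\<lambda>C. compactin X C \<and> closedin X C) X"
    using lcX reg locally_compact_regular_space_neighbourhood_base by blast
  obtain V M where VM: "openin X V" "compactin X M" "a \<in> V" "V \<subseteq> M" "M \<subseteq> U"
    using nb U a unfolding neighbourhood_base_of X_def by metis
  have cr: "completely_regular_space X"
    using locally_compact_regular_imp_completely_regular_space lcX hs by blast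
  have Us: "U \<subseteq> arr G" using U openin_imp_subset by auto
  have cl: "closedin X (topspace X - V)" using VM(1) by blast
  have at: "a \<in> topspace X - (topspace X - V)" using VM Us a by (auto simp: X_def)
  obtain f :: "'g \<Rightarrow> real" where f: "continuous_map X (top_of_set {0..1}) f" "f a = 0" "f ` (topspace X - V) \<subseteq> {1}"
    using cr cl at unfolding completely_regular_space_def by blast
  have fc: "continuous_on (arr G) f" using continuous_map_into_fulltopology[OF f(1)] by (simp add: X_def)
  define n where "n x = (if x \<in> arr G then complex_of_real (1 - f x) else 0)" for x
  have "continuous_on U (\<lambda>x. complex_of_real (1 - f x))"
    using continuous_on_subset[OF fc Us] by (intro continuous_intros)
  moreover have "\<And>x. x \<in> U \<Longrightarrow> complex_of_real (1 - f x) = n x" using Us by (auto simp: n_def)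
  ultimately have nc: "continuous_on U n" by (rule continuous_on_eq)
  have cM: "compact M" using VM(2) by (simp add: X_def compactin_subtopology)
  have n0: "n x = 0" if "x \<notin> M" for x
  proof (cases "x \<in> arr G")
    case True
    then have "x \<in> topspace X - V" using that VM by (auto simp: X_def)
    then have "f x = 1" using f(3) by blast
    then show ?thesis by (simp add: n_def)
  qed (simp add: n_def)
  have "Cc_on G U n" unfolding Cc_on_def using nc cM VM(5) n0 by blast
  moreover have "n a \<noteq> 0" using f(2) a Us by (auto simp: n_def)
  ultimately show ?thesis by blast
qed

theorem mainTheorem8:
  fixes G :: "('g::t2_space) gpd" and H :: "('h::t2_space) gpd"
    and \<phi> :: "('g \<Rightarrow> complex) \<Rightarrow> ('h \<Rightarrow> complex)"
    and F :: "'g set" and \<psi> :: "'g set \<Rightarrow> 'h set" and \<sigma> :: "'g \<Rightarrow> 'h"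
    and \<Phi> :: "'g \<Rightarrow> 'h" and c :: "'g \<Rightarrow> complex" and U :: "'g set"
  assumes G_etale: "etale_groupoid G"
    and H_eff: "effective H"
    and phi_hom: "star_hom G H \<phi>"
    and phi_units: "is_ideal_in H (\<phi> ` C0_in G (units G)) (C0_in H (units H))"
    \<comment> \<open>the closed invariant set F\<close>
    and F_sub: "F \<subseteq> units G"
    and F_closed: "closedin (top_of_set (units G)) F"
    and F_inv: "invariant G F"
    and F_ker: "{f \<in> C0_in G (units G). \<phi> f = (\<lambda>_. 0)} = C0_in G (units G - F)"
    \<comment> \<open>psi\<close>
    and psi_bis: "\<And>V. open_bisection G V \<Longrightarrow> open_bisection H (\<psi> V)"
    and psi_C0: "\<And>V. open_bisection G V \<Longrightarrow> \<phi> ` C0_in G V = C0_in H (\<psi> V)"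
    \<comment> \<open>sigma\<close>
    and sigma_open: "\<sigma> ` F \<subseteq> units H \<and> openin (top_of_set (units H)) (\<sigma> ` F)"
    and sigma_homeo: "\<exists>\<sigma>'. homeomorphism F (\<sigma> ` F) \<sigma> \<sigma>'"
    and sigma_C0: "\<phi> ` C0_in G (units G) = C0_in H (\<sigma> ` F)"
    and sigma_eval: "\<And>f x. f \<in> C0_in G (units G) \<Longrightarrow> x \<in> F \<Longrightarrow> \<phi> f (\<sigma> x) = f x"
    \<comment> \<open>Phi\<close>
    and Phi_def: "\<And>V a. open_bisection G V \<Longrightarrow> a \<in> V \<inter> reduction G F \<Longrightarrow>
                   \<Phi> a \<in> \<psi> V \<and> src H (\<Phi> a) = \<sigma> (src G a)"
    and Phi_homeo: "\<And>V. open_bisection G V \<Longrightarrow>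
                   \<Phi> ` (V \<inter> reduction G F) = \<psi> V
                   \<and> (\<exists>\<Phi>'. homeomorphism (V \<inter> reduction G F) (\<psi> V) \<Phi> \<Phi>')"
    \<comment> \<open>the cocycle c\<close>
    and c_cont: "continuous_on (reduction G F) c"
    and c_circle: "\<And>a. a \<in> reduction G F \<Longrightarrow> cmod (c a) = 1"
    and c_cocycle: "\<And>a b. a \<in> reduction G F \<Longrightarrow> b \<in> reduction G F \<Longrightarrow>
                   src G a = rng G b \<Longrightarrow> c (cmp G a b) = c a * c b"
    and c_def: "\<And>V n a. open_bisection G V \<Longrightarrow> n \<in> C0_in G V \<Longrightarrow> a \<in> V \<inter> reduction G F \<Longrightarrow>
                   n a \<noteq> 0 \<Longrightarrow> c a = \<phi> n (\<Phi> a) / n a"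
    \<comment> \<open>the fixed bisection\<close>
    and U_bis: "open_bisection G U"
  shows
    "(let S = U \<inter> reduction G F; T = phi_Phi_c \<Phi> c S in
        bij_betw T (C0fun S) (C0fun (\<Phi> ` S))
      \<and> (\<forall>f\<in>C0fun S. \<forall>g\<in>C0fun S. T (\<lambda>x. f x + g x) = (\<lambda>y. T f y + T g y))
      \<and> (\<forall>f\<in>C0fun S. \<forall>a. T (\<lambda>x. a * f x) = (\<lambda>y. a * T f y))
      \<and> (\<forall>f\<in>C0fun S. supnorm (\<Phi> ` S) (T f) = supnorm S f)
      \<and> (\<forall>f\<in>C0_in G U. restr S f \<in> C0fun S \<and> \<phi> f = T (restr S f))
      \<and> (\<forall>phiU. (\<forall>f\<in>C0_in G U. \<phi> f = phiU (restr S f)) \<longrightarrow> (\<forall>g\<in>C0fun S. phiU g = T g)))"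
proof -
  have gG: "groupoid G" and lcG: "locally_compact_space (top_of_set (arr G))"
    and srcc: "continuous_on (arr G) (src G)"
    using G_etale by (auto simp: etale_groupoid_def)
  have gH: "groupoid H" using H_eff by (auto simp: effective_def etale_groupoid_def)
  define R where "R = reduction G F"
  define S where "S = U \<inter> R"
  define W where "W = \<psi> U"
  define T where "T = phi_Phi_c \<Phi> c S"
  have Ub: "U \<subseteq> arr G" "openin (top_of_set (arr G)) U" using U_bis by (auto simp: open_bisection_def)
  have Wbis: "open_bisection H W" using psi_bis[OF U_bis] by (simp add: W_def)
  have PhiS: "\<Phi> ` S = W" using Phi_homeo[OF U_bis] by (simp add: S_def R_def W_def)
  obtain \<Phi>' where hom: "homeomorphism S W \<Phi> \<Phi>'"
    using Phi_homeo[OF U_bis] by (auto simp: S_def R_def W_def)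
  have h1: "\<And>x. x \<in> S \<Longrightarrow> \<Phi>' (\<Phi> x) = x" and h2: "\<And>y. y \<in> W \<Longrightarrow> \<Phi> (\<Phi>' y) = y"
    and h3: "\<Phi>' ` W = S" and hc1: "continuous_on S \<Phi>" and hc2: "continuous_on W \<Phi>'"
    using hom by (auto simp: homeomorphism_def)
  have h4: "\<And>y. y \<in> W \<Longrightarrow> \<Phi>' y \<in> S" using h3 by blast
  have h5: "\<And>x. x \<in> S \<Longrightarrow> \<Phi> x \<in> W" using PhiS by blast
  have injP: "inj_on \<Phi> S" using h1 by (metis inj_onI)
  have tinv: "the_inv_into S \<Phi> y = \<Phi>' y" if "y \<in> W" for y
    using the_inv_into_f_f[OF injP h4[OF that]] h2[OF that] by simp
  have Tf: "T f = (\<lambda>y. if y \<in> W then c (\<Phi>' y) * f (\<Phi>' y) else 0)" for f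
    unfolding T_def phi_Phi_c_def PhiS using tinv by (auto intro!: ext)
  have SR: "S \<subseteq> R" by (auto simp: S_def)
  have cS1: "\<And>x. x \<in> S \<Longrightarrow> cmod (c x) = 1" using c_circle SR by (auto simp: R_def)
  have cS0: "\<And>x. x \<in> S \<Longrightarrow> c x \<noteq> 0" using cS1 by fastforce
  have cSc: "continuous_on S c" using c_cont SR continuous_on_subset by (auto simp: R_def)
  have TPhi: "T f (\<Phi> x) = c x * f x" if "x \<in> S" for f x
    using that h5 h1 by (simp add: Tf)
  define Ti where "Ti g = (\<lambda>x. if x \<in> S then g (\<Phi> x) / c x else 0)" for g
  have TC0: "T f \<in> C0fun W" if f: "f \<in> C0fun S" for f
  proof -
    have fc: "continuous_on S f" and f0: "\<And>x. x \<notin> S \<Longrightarrow> f x = 0"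
      and fv: "\<And>e. e > 0 \<Longrightarrow> \<exists>K. compact K \<and> K \<subseteq> S \<and> (\<forall>x\<in>S - K. cmod (f x) < e)"
      using f by (auto simp: C0fun_def)
    have "continuous_on W (\<lambda>y. c (\<Phi>' y) * f (\<Phi>' y))"
      by (intro continuous_on_mult continuous_on_compose2[OF cSc hc2] continuous_on_compose2[OF fc hc2])
         (use h3 in auto)
    moreover have "\<And>y. y \<in> W \<Longrightarrow> c (\<Phi>' y) * f (\<Phi>' y) = T f y" by (simp add: Tf)
    ultimately have "continuous_on W (T f)" by (rule continuous_on_eq)
    moreover have "\<exists>K. compact K \<and> K \<subseteq> W \<and> (\<forall>y\<in>W - K. cmod (T f y) < e)" if e: "e > 0" for e
    proof -
      obtain K where K: "compact K" "K \<subseteq> S" "\<forall>x\<in>S - K. cmod (f x) < e" using fv[OF e] by blast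
      have "compact (\<Phi> ` K)" using K continuous_on_subset[OF hc1] compact_continuous_image by blast
      moreover have "\<Phi> ` K \<subseteq> W" using K PhiS by blast
      moreover have "cmod (T f y) < e" if y: "y \<in> W - \<Phi> ` K" for y
      proof -
        have "\<Phi>' y \<in> S" using h4 y by blast
        moreover have "\<Phi>' y \<notin> K" using y h2 by (metis DiffD1 DiffD2 image_eqI)
        ultimately have "cmod (f (\<Phi>' y)) < e" using K by blast
        then show ?thesis using y cS1[OF \<open>\<Phi>' y \<in> S\<close>] by (simp add: Tf norm_mult)
      qed
      ultimately show ?thesis by blast
    qed
    moreover have "\<And>y. y \<notin> W \<Longrightarrow> T f y = 0" by (simp add: Tf)
    ultimately show ?thesis by (simp add: C0fun_def)
  qed
  have TiC0: "Ti g \<in> C0fun S" if g: "g \<in> C0fun W" for g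
  proof -
    have gc: "continuous_on W g" and g0: "\<And>x. x \<notin> W \<Longrightarrow> g x = 0"
      and gv: "\<And>e. e > 0 \<Longrightarrow> \<exists>K. compact K \<and> K \<subseteq> W \<and> (\<forall>x\<in>W - K. cmod (g x) < e)"
      using g by (auto simp: C0fun_def)
    have "continuous_on S (\<lambda>x. g (\<Phi> x) / c x)"
      by (intro continuous_on_divide continuous_on_compose2[OF gc hc1] cSc) (use PhiS cS0 in auto)
    moreover have "\<And>x. x \<in> S \<Longrightarrow> g (\<Phi> x) / c x = Ti g x" by (simp add: Ti_def)
    ultimately have "continuous_on S (Ti g)" by (rule continuous_on_eq)
    moreover have "\<exists>K. compact K \<and> K \<subseteq> S \<and> (\<forall>x\<in>S - K. cmod (Ti g x) < e)" if e: "e > 0" for e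
    proof -
      obtain K where K: "compact K" "K \<subseteq> W" "\<forall>x\<in>W - K. cmod (g x) < e" using gv[OF e] by blast
      have "compact (\<Phi>' ` K)" using K continuous_on_subset[OF hc2] compact_continuous_image by blast
      moreover have "\<Phi>' ` K \<subseteq> S" using K h3 by blast
      moreover have "cmod (Ti g x) < e" if x: "x \<in> S - \<Phi>' ` K" for x
      proof -
        have "\<Phi> x \<in> W" using h5 x by blast
        moreover have "\<Phi> x \<notin> K" using x h1 by (metis DiffD1 DiffD2 image_eqI)
        ultimately have "cmod (g (\<Phi> x)) < e" using K by blast
        then show ?thesis using x cS1[of x] by (simp add: Ti_def norm_divide)
      qed
      ultimately show ?thesis by blast
    qed
    moreover have "\<And>x. x \<notin> S \<Longrightarrow> Ti g x = 0" by (simp add: Ti_def)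
    ultimately show ?thesis by (simp add: C0fun_def)
  qed
  have TiT: "Ti (T f) = f" if f: "f \<in> C0fun S" for f
  proof
    fix x show "Ti (T f) x = f x"
    proof (cases "x \<in> S")
      case True then show ?thesis using TPhi[OF True] cS0[OF True] by (simp add: Ti_def)
    next
      case False then show ?thesis using f by (simp add: Ti_def C0fun_def)
    qed
  qed
  have TTi: "T (Ti g) = g" if g: "g \<in> C0fun W" for g
  proof
    fix y show "T (Ti g) y = g y"
    proof (cases "y \<in> W")
      case True then show ?thesis using h4[OF True] h2[OF True] cS0[OF h4[OF True]] by (simp add: Ti_def Tf)
    next
      case False then show ?thesis using g by (simp add: Tf C0fun_def)
    qed
  qed
  have bij: "bij_betw T (C0fun S) (C0fun W)"
    by (rule bij_betw_byWitness[where f'=Ti]) (use TiT TTi TC0 TiC0 in auto)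
  have add: "T (\<lambda>x. f x + g x) = (\<lambda>y. T f y + T g y)" for f g
    by (auto simp: Tf algebra_simps)
  have smul: "T (\<lambda>x. a * f x) = (\<lambda>y. a * T f y)" for a f
    by (auto simp: Tf algebra_simps)
  have sup: "supnorm W (T f) = supnorm S f" for f
  proof -
    have "(\<lambda>y. cmod (T f y)) ` W = (\<lambda>x. cmod (f x)) ` S"
      unfolding PhiS[symmetric] image_image using TPhi cS1 by (auto simp: norm_mult intro!: image_cong)
    moreover have "W = {} \<longleftrightarrow> S = {}" using PhiS by auto
    ultimately show ?thesis by (simp add: supnorm_def)
  qed
  have compR: "compact (K \<inter> R)" if K: "compact K" "K \<subseteq> arr G" for K
  proof -
    obtain C where C: "closed C" "F = units G \<inter> C" using F_closed by (auto simp: closedin_closed)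
    have "K \<inter> R = K \<inter> src G -` C" using K C by (auto simp: R_def reduction_def units_def)
    moreover have "closedin (top_of_set K) (K \<inter> src G -` C)"
      by (rule continuous_closedin_preimage[OF continuous_on_subset[OF srcc K(2)] C(1)])
    ultimately show ?thesis using closedin_compact K(1) by metis
  qed
  have restrC0: "restr S f \<in> C0fun S" if f: "f \<in> C0_in G U" for f
  proof -
    have fc: "continuous_on U f" and fv: "\<And>e. e > 0 \<Longrightarrow> \<exists>K. compact K \<and> K \<subseteq> U \<and> (\<forall>x\<in>U-K. cmod (f x) < e)"
      using C0_unif[OF gG U_bis f] by auto
    have "continuous_on S f" using fc by (rule continuous_on_subset) (auto simp: S_def)
    moreover have "\<And>x. x \<in> S \<Longrightarrow> f x = restr S f x" by (simp add: restr_def)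
    ultimately have "continuous_on S (restr S f)" by (rule continuous_on_eq)
    moreover have "\<exists>K. compact K \<and> K \<subseteq> S \<and> (\<forall>x\<in>S - K. cmod (restr S f x) < e)" if e: "e > 0" for e
    proof -
      obtain K where K: "compact K" "K \<subseteq> U" "\<forall>x\<in>U-K. cmod (f x) < e" using fv[OF e] by blast
      have "compact (K \<inter> R)" using compR K Ub by blast
      moreover have "K \<inter> R \<subseteq> S" using K by (auto simp: S_def)
      moreover have "\<forall>x\<in>S - (K \<inter> R). cmod (restr S f x) < e" using K by (auto simp: S_def restr_def)
      ultimately show ?thesis by blast
    qed
    ultimately show ?thesis by (simp add: C0fun_def restr_def)
  qed
  have unG: "units G \<noteq> {}" if "a \<in> arr G" for a using that by (auto simp: units_def)
  have cdef: "\<phi> n (\<Phi> a) = c a * n a" if n: "n \<in> C0_in G U" "n a \<noteq> 0" and a: "a \<in> S" for n a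
    using c_def[OF U_bis n(1) _ n(2)] a n(2) by (simp add: S_def R_def)
  have key: "\<phi> f (\<Phi> a) = c a * f a" if f: "f \<in> C0_in G U" and a: "a \<in> S" for f a
  proof (cases "f a = 0")
    case False then show ?thesis using cdef f a by blast
  next
    case True
    have aU: "a \<in> U" and aA: "a \<in> arr G" using a Ub by (auto simp: S_def)
    obtain n0 where n0: "Cc_on G U n0" "n0 a \<noteq> 0" using bump[OF lcG Ub(2) aU] by blast
    have z: "rnorm G (\<lambda>c. 0) \<le> 0"
      by (rule rnorm_bis(1)[OF gG, of "{}"]) (use unG[OF aA] in auto)
    have n0C: "n0 \<in> C0_in G U" unfolding C0_in_def
      by (rule CollectI, rule exI[of _ "\<lambda>_. n0"]) (use n0 z in auto)
    obtain gs where gs: "\<And>k. Cc_on G U (gs k)"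
      and cau: "\<forall>e>0. \<exists>N. \<forall>m\<ge>N. \<forall>n\<ge>N. rnorm G (\<lambda>c. gs m c - gs n c) < e"
      and lim: "\<And>c. (\<lambda>k. gs k c) \<longlonglongrightarrow> f c"
      using f unfolding C0_in_def by blast
    have Ccs: "Cc_on G U (\<lambda>c. gs k c + n0 c)" for k
    proof -
      obtain K1 where K1: "compact K1" "K1 \<subseteq> U" "\<And>x. x \<notin> K1 \<Longrightarrow> gs k x = 0"
        using gs[of k] by (auto simp: Cc_on_def)
      obtain K2 where K2: "compact K2" "K2 \<subseteq> U" "\<And>x. x \<notin> K2 \<Longrightarrow> n0 x = 0"
        using n0 by (auto simp: Cc_on_def)
      have "continuous_on U (\<lambda>c. gs k c + n0 c)"
        using gs[of k] n0(1) by (auto simp: Cc_on_def intro!: continuous_on_add)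
      moreover have "compact (K1 \<union> K2)" using K1 K2 by blast
      ultimately show ?thesis unfolding Cc_on_def using K1 K2
        by (intro conjI exI[of _ "K1 \<union> K2"]) auto
    qed
    have fn: "(\<lambda>c. f c + n0 c) \<in> C0_in G U" unfolding C0_in_def
    proof (rule CollectI, rule exI[of _ "\<lambda>k c. gs k c + n0 c"], intro conjI)
      show "\<forall>k. Cc_on G U (\<lambda>c. gs k c + n0 c)" using Ccs by blast
      show "\<forall>c. (\<lambda>k. gs k c + n0 c) \<longlonglongrightarrow> f c + n0 c" by (intro allI tendsto_intros lim)
      show "\<forall>e>0. \<exists>N. \<forall>m\<ge>N. \<forall>n\<ge>N. rnorm G (\<lambda>c. gs m c + n0 c - (gs n c + n0 c)) < e"
        using cau by simp
    qed
    have fS: "f \<in> Cstar_r G" and nS: "n0 \<in> Cstar_r G"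
      using C0_Cstar[OF Ub(2)] f n0C by auto
    have addphi: "\<phi> (\<lambda>c. f c + n0 c) = (\<lambda>c. \<phi> f c + \<phi> n0 c)"
      using phi_hom fS nS by (simp add: star_hom_def)
    have "\<phi> (\<lambda>c. f c + n0 c) (\<Phi> a) = c a * (f a + n0 a)"
      using cdef[OF fn _ a] True n0(2) by simp
    then have "\<phi> f (\<Phi> a) + \<phi> n0 (\<Phi> a) = c a * n0 a" using addphi True by simp
    then show ?thesis using cdef[OF n0C n0(2) a] True by simp
  qed
  have part5: "restr S f \<in> C0fun S \<and> \<phi> f = T (restr S f)" if f: "f \<in> C0_in G U" for f
  proof
    show "restr S f \<in> C0fun S" by (rule restrC0[OF f])
    show "\<phi> f = T (restr S f)"
    proof
      fix y show "\<phi> f y = T (restr S f) y"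
      proof (cases "y \<in> W")
        case True
        have "\<phi> f (\<Phi> (\<Phi>' y)) = c (\<Phi>' y) * f (\<Phi>' y)" by (rule key[OF f h4[OF True]])
        then show ?thesis using True h2[OF True] h4[OF True] by (simp add: Tf restr_def)
      next
        case False
        have "\<phi> f \<in> C0_in H W" using psi_C0[OF U_bis] f by (auto simp: W_def)
        then show ?thesis using C0_zero False by (simp add: Tf)
      qed
    qed
  qed
  have small: "rnorm H h < e" if "units H = {}" "e > 0" for h e
  proof -
    have "(\<lambda>_. 0) \<in> C0_in H (units H)" using phi_units by (auto simp: is_ideal_in_def)
    then have "\<exists>hs::nat \<Rightarrow> 'h \<Rightarrow> complex. \<forall>e>0. \<exists>N. \<forall>m\<ge>N. \<forall>n\<ge>N. rnorm H (\<lambda>c. hs m c - hs n c) < e"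
      unfolding C0_in_def mem_Collect_eq by blast
    then obtain hs :: "nat \<Rightarrow> 'h \<Rightarrow> complex" where "\<forall>e>0. \<exists>N. \<forall>m\<ge>N. \<forall>n\<ge>N. rnorm H (\<lambda>c. hs m c - hs n c) < e"
      by blast
    then obtain N :: nat where N: "rnorm H (\<lambda>c. hs N c - hs N c) < e" using \<open>e > 0\<close> by blast
    have "rnorm H h = rnorm H (\<lambda>c. hs N c - hs N c)" using that(1) by (simp add: rnorm_def)
    then show ?thesis using N by simp
  qed
  have part6: "phiU g = T g" if hyp: "\<forall>f\<in>C0_in G U. \<phi> f = phiU (restr S f)" and g: "g \<in> C0fun S" for phiU g
  proof -
    have "T g \<in> C0_in H W" by (rule C0fun_in[OF gH Wbis small TC0[OF g]])
    then obtain f where f: "f \<in> C0_in G U" "T g = \<phi> f" using psi_C0[OF U_bis] by (auto simp: W_def)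
    have "T (restr S f) = T g" using part5[OF f(1)] f(2) by simp
    then have "restr S f = g" using bij g restrC0[OF f(1)] by (metis bij_betw_def inj_onD)
    then show ?thesis using hyp f by metis
  qed
  show ?thesis
    unfolding Let_def S_def[symmetric] R_def[symmetric] T_def[symmetric] PhiS
    using bij add smul sup part5 part6 by blast
qed

end
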